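(* Let $n\ge2$, let $A\in\mathbb{R}^{n\times n}$ be Metzler, output unstable and nonsingular, $b_0\in\mathbb{R}^n_{\ge0}$, $r>0$, $g_0:=-e_n^TA^{-1}b_0$, $g_n:=-e_n^TA^{-1}e_n$, $u_*:=(g_0-r)/(g_nr)$. Then $\bar A:=A-u_*e_ne_n^T$ is Hurwitz stable if and only if $g_0<0$.
   Context: $S:=[e_1\ \cdots\ e_{n-1}]$, $e_i$ standard basis vectors. Metzler: all off-diagonal entries nonnegative. Hurwitz stable: all eigenvalues have negative real part. $M$ is output unstable if $S^TMS$ is Hurwitz stable and $e_n^TMe_n>0$. *)

theory Defs
  imports "Jordan_Normal_Form.Matrix" "Jordan_Normal_Form.Char_Poly"
begin

definition metzler :: "real mat \<Rightarrow> bool" where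
  "metzler M \<longleftrightarrow> (\<forall>i < dim_row M. \<forall>j < dim_col M. i \<noteq> j \<longrightarrow> 0 \<le> M $$ (i, j))"

definition hurwitz :: "real mat \<Rightarrow> bool" where
  "hurwitz M \<longleftrightarrow> square_mat M \<and>
     (\<forall>z. eigenvalue (map_mat complex_of_real M) z \<longrightarrow> Re z < 0)"

definition S_mat :: "nat \<Rightarrow> real mat" where
  "S_mat n = mat n (n - 1) (\<lambda>(i, j). if i = j then 1 else 0)"

definition e_last :: "nat \<Rightarrow> real vec" where
  "e_last n = unit_vec n (n - 1)"

definition output_unstable :: "real mat \<Rightarrow> bool" where
  "output_unstable M \<longleftrightarrow>
     (let n = dim_row M in
       hurwitz (transpose_mat (S_mat n) * M * S_mat n) \<and>
       e_last n \<bullet> (M *\<^sub>v e_last n) > 0)"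

definition En_mat :: "nat \<Rightarrow> real mat" where
  "En_mat n = mat n n (\<lambda>(i, j). e_last n $ i * e_last n $ j)"

end

theory Submission imports Defs "Jordan_Normal_Form.Spectral_Radius" begin

lemma mv_idx: "A \<in> carrier_mat m k \<Longrightarrow> v \<in> carrier_vec k \<Longrightarrow> i < m \<Longrightarrow>
  (A *\<^sub>v v) $ i = (\<Sum>j\<in>{0..<k}. A $$ (i,j) * v $ j)"
  by (auto simp: scalar_prod_def)

lemma hurwitz_of_pos_vec:
  assumes M: "M \<in> carrier_mat m m" and met: "metzler M" and v: "v \<in> carrier_vec m"
    and vpos: "\<forall>i<m. v$i > 0" and Mv: "\<forall>i<m. (M *\<^sub>v v)$i < 0"
  shows "hurwitz M"
  unfolding hurwitz_def
proof (intro conjI allI impI)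
  show "square_mat M" using M by auto
  fix z assume "eigenvalue (map_mat complex_of_real M) z"
  then obtain w where w: "w \<in> carrier_vec m" "w \<noteq> 0\<^sub>v m"
     and eq: "map_mat complex_of_real M *\<^sub>v w = z \<cdot>\<^sub>v w"
    using M unfolding eigenvalue_def eigenvector_def by auto
  define f where "f j = cmod (w$j) / v$j" for j
  from w obtain j0 where j0: "j0 < m" "w$j0 \<noteq> 0" by (auto simp: vec_eq_iff)
  define \<rho> where "\<rho> = Max (f ` {0..<m})"
  have fin: "finite (f ` {0..<m})" by auto
  have ne: "f ` {0..<m} \<noteq> {}" using j0 by auto
  obtain i where i: "i < m" "f i = \<rho>" using Max_in[OF fin ne] unfolding \<rho>_def by auto
  have fle: "f j \<le> \<rho>" if "j < m" for j unfolding \<rho>_def using that fin by auto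
  have wle: "cmod (w$j) \<le> \<rho> * v$j" if "j < m" for j
    using fle[OF that] vpos that by (auto simp: f_def field_simps)
  have "f j0 > 0" using j0 vpos by (auto simp: f_def)
  hence rpos: "\<rho> > 0" using fle[OF j0(1)] by auto
  have wi: "cmod (w$i) = \<rho> * v$i" using i vpos by (auto simp: f_def field_simps)
  have ei: "z * w$i = (\<Sum>j\<in>{0..<m}. complex_of_real (M $$ (i,j)) * w $ j)"
  proof -
    have "z * w$i = (map_mat complex_of_real M *\<^sub>v w) $ i" using eq i w by simp
    also have "\<dots> = (\<Sum>j\<in>{0..<m}. complex_of_real (M $$ (i,j)) * w $ j)"
      using M w i by (subst mv_idx[of _ m m]) auto
    finally show ?thesis .
  qed
  have split: "(\<Sum>j\<in>{0..<m}. g j) = g i + (\<Sum>j\<in>{0..<m}-{i}. g j)" for g :: "nat \<Rightarrow> 'b::comm_monoid_add"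
    using i by (simp add: sum.remove)
  have e2: "(z - complex_of_real (M$$(i,i))) * w$i = (\<Sum>j\<in>{0..<m}-{i}. complex_of_real (M $$ (i,j)) * w $ j)"
    using ei split[of "\<lambda>j. complex_of_real (M $$ (i,j)) * w $ j"] by (simp add: algebra_simps)
  have "cmod (z - complex_of_real (M$$(i,i))) * cmod (w$i) \<le> (\<Sum>j\<in>{0..<m}-{i}. M $$ (i,j) * cmod (w $ j))"
  proof -
    have "cmod (z - complex_of_real (M$$(i,i))) * cmod (w$i) = cmod (\<Sum>j\<in>{0..<m}-{i}. complex_of_real (M $$ (i,j)) * w $ j)"
      using e2 by (metis norm_mult)
    also have "\<dots> \<le> (\<Sum>j\<in>{0..<m}-{i}. cmod (complex_of_real (M $$ (i,j)) * w $ j))" by (rule norm_sum)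
    also have "\<dots> = (\<Sum>j\<in>{0..<m}-{i}. M $$ (i,j) * cmod (w $ j))"
    proof (rule sum.cong)
      fix j assume "j \<in> {0..<m}-{i}"
      hence "M $$ (i,j) \<ge> 0" using met M i unfolding metzler_def by auto
      thus "cmod (complex_of_real (M $$ (i,j)) * w $ j) = M $$ (i,j) * cmod (w $ j)"
        by (simp add: norm_mult)
    qed simp
    finally show ?thesis .
  qed
  also have "\<dots> \<le> (\<Sum>j\<in>{0..<m}-{i}. M $$ (i,j) * (\<rho> * v $ j))"
  proof (rule sum_mono)
    fix j assume "j \<in> {0..<m}-{i}"
    hence "M $$ (i,j) \<ge> 0" "j < m" using met M i unfolding metzler_def by auto
    thus "M $$ (i,j) * cmod (w $ j) \<le> M $$ (i,j) * (\<rho> * v $ j)" using wle by (simp add: mult_left_mono)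
  qed
  also have "\<dots> = \<rho> * ((M *\<^sub>v v) $ i - M$$(i,i) * v$i)"
  proof -
    have mvi: "(M *\<^sub>v v)$i = (\<Sum>j\<in>{0..<m}. M $$ (i,j) * v $ j)"
      using M v i by (subst mv_idx[of _ m m]) auto
    show ?thesis unfolding mvi split[of "\<lambda>j. M $$ (i,j) * v $ j"]
      by (simp add: sum_distrib_left algebra_simps)
  qed
  also have "\<dots> < \<rho> * (- M$$(i,i) * v$i)" using Mv i rpos by (simp add: algebra_simps mult_pos_neg)
  also have "\<dots> = - M$$(i,i) * cmod (w$i)" using wi by simp
  finally have lt: "cmod (z - complex_of_real (M$$(i,i))) < - M$$(i,i)"
    using mult_less_cancel_right_pos[of "cmod (w$i)"] wi rpos vpos i by (metis mult_pos_pos)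
  have "Re z - M$$(i,i) \<le> cmod (z - complex_of_real (M$$(i,i)))"
    using complex_Re_le_cmod[of "z - complex_of_real (M$$(i,i))"] by simp
  thus "Re z < 0" using lt by linarith
qed

lemma metzler_hurwitz_nonpos:
  assumes B: "B \<in> carrier_mat m m" and met: "metzler B" and hur: "hurwitz B"
    and x: "x \<in> carrier_vec m" and Bx: "\<forall>i<m. (B *\<^sub>v x)$i \<ge> 0"
    and im: "i < m"
  shows "x $ i \<le> 0"
proof -
  have m0: "m > 0" using im by auto
  define Bc where "Bc = map_mat complex_of_real B"
  have Bc: "Bc \<in> carrier_mat m m" using B by (auto simp: Bc_def)
  define Sp where "Sp = spectrum Bc"
  have finSp: "finite Sp" using card_finite_spectrum[OF Bc] by (simp add: Sp_def)
  have reneg: "Re \<mu> < 0" if "\<mu> \<in> Sp" for \<mu>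
    using hur that unfolding hurwitz_def Sp_def spectrum_def Bc_def by auto
  define c where "c = 1 + (\<Sum>\<mu>\<in>Sp. (cmod \<mu>)^2 / (-2 * Re \<mu>)) + (\<Sum>j<m. \<bar>B $$ (j,j)\<bar>)"
  have s1: "(cmod \<mu>)^2 / (-2 * Re \<mu>) \<le> (\<Sum>\<mu>\<in>Sp. (cmod \<mu>)^2 / (-2 * Re \<mu>))" if "\<mu> \<in> Sp" for \<mu>
    by (rule member_le_sum[OF that _ finSp]) (use reneg in \<open>auto intro!: divide_nonneg_neg\<close>)
  have s1': "0 \<le> (\<Sum>\<mu>\<in>Sp. (cmod \<mu>)^2 / (-2 * Re \<mu>))"
    by (rule sum_nonneg) (use reneg in \<open>auto intro!: divide_nonneg_neg\<close>)
  have s2: "\<bar>B $$ (j,j)\<bar> \<le> (\<Sum>j<m. \<bar>B $$ (j,j)\<bar>)" if "j < m" for j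
    by (rule member_le_sum) (use that in auto)
  have s2': "0 \<le> (\<Sum>j<m. \<bar>B $$ (j,j)\<bar>)" by (rule sum_nonneg) auto
  have cpos: "c \<ge> 1" using s1' s2' by (simp add: c_def)
  have diag: "B $$ (j,j) + c > 0" if "j < m" for j using s2[OF that] s1' by (simp add: c_def)
  have close: "cmod (\<mu> + complex_of_real c) < c" if mu: "\<mu> \<in> Sp" for \<mu>
  proof -
    have r: "Re \<mu> < 0" using reneg[OF mu] .
    have "(cmod \<mu>)^2 / (-2 * Re \<mu>) < c" using s1[OF mu] s2' unfolding c_def by linarith
    moreover have d: "-2 * Re \<mu> > 0" using r by simp
    ultimately have "(cmod \<mu>)^2 < c * (-2 * Re \<mu>)" using pos_divide_less_eq[OF d] by blast
    hence lt: "(Re \<mu>)^2 + (Im \<mu>)^2 + 2 * c * Re \<mu> < 0"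
      by (simp add: cmod_power2 algebra_simps)
    have "(cmod (\<mu> + complex_of_real c))^2 = (Re \<mu> + c)^2 + (Im \<mu>)^2" by (simp add: cmod_power2)
    also have "\<dots> < c^2" using lt by (simp add: power2_eq_square algebra_simps)
    finally show ?thesis using cpos by (smt (verit) power_mono norm_ge_zero)
  qed
  define Mx where "Mx = Max (insert 0 ((\<lambda>\<mu>. cmod (\<mu> + complex_of_real c)) ` Sp))"
  have Mxfin: "finite (insert 0 ((\<lambda>\<mu>. cmod (\<mu> + complex_of_real c)) ` Sp))" using finSp by auto
  have Mx0: "0 \<le> Mx" unfolding Mx_def using Mxfin by auto
  have Mxc: "Mx < c" unfolding Mx_def using Mxfin cpos close
    by (subst Max_less_iff) auto
  have Mxge: "cmod (\<mu> + complex_of_real c) \<le> Mx" if "\<mu> \<in> Sp" for \<mu>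
    unfolding Mx_def using Mxfin that by auto
  define c2 where "c2 = (Mx + c) / 2"
  have c2pos: "c2 > 0" and c2c: "c2 < c" and Mxc2: "Mx < c2" using Mx0 Mxc cpos by (auto simp: c2_def)
  define R where "R = mat m m (\<lambda>(i,j). (B $$ (i,j) + (if i = j then c else 0)) / c2)"
  have R: "R \<in> carrier_mat m m" by (simp add: R_def)
  have Rnn: "R $$ (i,j) \<ge> 0" if "i < m" "j < m" for i j
  proof (cases "i = j")
    case True thus ?thesis using diag[OF that(1)] that c2pos by (simp add: R_def)
  next
    case False thus ?thesis using met B that c2pos unfolding metzler_def by (simp add: R_def)
  qed
  define Rc where "Rc = map_mat complex_of_real R"
  have Rc: "Rc \<in> carrier_mat m m" using R by (simp add: Rc_def)
  have evR: "cmod \<nu> < 1" if ev: "eigenvalue Rc \<nu>" for \<nu>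
  proof -
    from ev obtain v where v: "v \<in> carrier_vec m" "v \<noteq> 0\<^sub>v m" and eq: "Rc *\<^sub>v v = \<nu> \<cdot>\<^sub>v v"
      using Rc unfolding eigenvalue_def eigenvector_def by auto
    have "Bc *\<^sub>v v = (complex_of_real c2 * \<nu> - complex_of_real c) \<cdot>\<^sub>v v"
    proof (rule eq_vecI)
      fix i assume i: "i < dim_vec ((complex_of_real c2 * \<nu> - complex_of_real c) \<cdot>\<^sub>v v)"
      hence i: "i < m" using v by auto
      have "(Rc *\<^sub>v v) $ i = (\<Sum>j\<in>{0..<m}. Rc $$ (i,j) * v $ j)" by (rule mv_idx[OF Rc v(1) i])
      also have "\<dots> = (\<Sum>j\<in>{0..<m}. (Bc $$ (i,j) * v $ j + (if i = j then complex_of_real c * v $ j else 0)) / complex_of_real c2)"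
        by (rule sum.cong) (use i in \<open>auto simp: Rc_def R_def Bc_def carrier_matD[OF B] add_divide_distrib ring_distribs\<close>)
      also have "\<dots> = ((\<Sum>j\<in>{0..<m}. Bc $$ (i,j) * v $ j) + complex_of_real c * v $ i) / complex_of_real c2"
        using i by (simp add: sum_divide_distrib[symmetric] sum.distrib)
      also have "(\<Sum>j\<in>{0..<m}. Bc $$ (i,j) * v $ j) = (Bc *\<^sub>v v) $ i" by (rule mv_idx[OF Bc v(1) i, symmetric])
      finally have "(Bc *\<^sub>v v) $ i = complex_of_real c2 * (Rc *\<^sub>v v) $ i - complex_of_real c * v $ i"
        using c2pos by (simp add: field_simps)
      thus "(Bc *\<^sub>v v) $ i = ((complex_of_real c2 * \<nu> - complex_of_real c) \<cdot>\<^sub>v v) $ i"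
        using eq i v by (simp add: algebra_simps)
    qed (use v Bc in auto)
    hence "complex_of_real c2 * \<nu> - complex_of_real c \<in> Sp"
      unfolding Sp_def spectrum_def eigenvalue_def eigenvector_def using v Bc by auto
    from Mxge[OF this] Mxc2 have "cmod (complex_of_real c2 * \<nu>) < c2" by simp
    thus ?thesis using c2pos by (simp add: norm_mult)
  qed
  have "spectral_radius Rc \<in> norm ` spectrum Rc" by (rule spectral_radius_mem_max(1)[OF Rc m0])
  hence "spectral_radius Rc < 1" using evR unfolding spectrum_def by auto
  then obtain K where K: "\<And>k. norm_bound (Rc ^\<^sub>m k) K"
    using spectral_radius_jnf_norm_bound_less_1_upper_triangular[OF Rc] by blast
  have Kb: "\<bar>(R ^\<^sub>m k) $$ (i,j)\<bar> \<le> K" if "i < m" "j < m" for i j k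
  proof -
    have "Rc ^\<^sub>m k = map_mat complex_of_real (R ^\<^sub>m k)"
      unfolding Rc_def by (rule of_real_hom.mat_hom_pow[OF R, symmetric])
    with K[of k] that R show ?thesis unfolding norm_bound_def by auto
  qed
  define \<theta> where "\<theta> = c2 / c"
  have th0: "\<theta> > 0" and th1: "\<theta> < 1" using c2pos c2c cpos by (auto simp: \<theta>_def)
  have Rmono: "(R *\<^sub>v u) $ i \<le> (R *\<^sub>v w) $ i" if "u \<in> carrier_vec m" "w \<in> carrier_vec m"
     "\<forall>j<m. u$j \<le> w$j" "i < m" for u w i
    unfolding mv_idx[OF R that(1) that(4)] mv_idx[OF R that(2) that(4)]
    by (rule sum_mono) (use that Rnn in \<open>auto intro: mult_left_mono\<close>)
  have xstep: "x$i \<le> \<theta> * (R *\<^sub>v x) $ i" if "i < m" for i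
  proof -
    have "(R *\<^sub>v x) $ i = (\<Sum>j\<in>{0..<m}. (B $$ (i,j) * x $ j + (if i = j then c * x $ j else 0)) / c2)"
      unfolding mv_idx[OF R x that] by (rule sum.cong) (use that in \<open>auto simp: R_def add_divide_distrib ring_distribs\<close>)
    also have "\<dots> = ((B *\<^sub>v x) $ i + c * x $ i) / c2"
      using that by (simp add: sum_divide_distrib[symmetric] sum.distrib mv_idx[OF B x that])
    finally have "\<theta> * (R *\<^sub>v x) $ i = ((B *\<^sub>v x) $ i + c * x $ i) / c"
      using c2pos by (simp add: \<theta>_def)
    hence "c * (\<theta> * (R *\<^sub>v x) $ i) = c * x $ i + (B *\<^sub>v x) $ i" using cpos by (simp add: field_simps)
    hence "c * x $ i \<le> c * (\<theta> * (R *\<^sub>v x) $ i)" using Bx that by simp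
    thus ?thesis using cpos by simp
  qed
  have iter: "\<forall>y\<in>carrier_vec m. (\<forall>i<m. y$i \<le> \<theta> * (R *\<^sub>v y) $ i) \<longrightarrow>
       (\<forall>i<m. y$i \<le> \<theta>^k * (R ^\<^sub>m k *\<^sub>v y) $ i)" for k
  proof (induction k)
    case 0 thus ?case using R by auto
  next
    case (Suc k)
    show ?case
    proof (intro ballI impI allI)
      fix y i assume y: "y \<in> carrier_vec m" and hy: "\<forall>i<m. y$i \<le> \<theta> * (R *\<^sub>v y) $ i" and i: "i < m"
      define y' where "y' = \<theta> \<cdot>\<^sub>v (R *\<^sub>v y)"
      have y': "y' \<in> carrier_vec m" using R y by (simp add: y'_def)
      have yy': "\<forall>j<m. y$j \<le> y'$j" using hy R y by (simp add: y'_def)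
      have "\<forall>j<m. y'$j \<le> \<theta> * (R *\<^sub>v y') $ j"
      proof (intro allI impI)
        fix j assume j: "j < m"
        have "(R *\<^sub>v y) $ j \<le> (R *\<^sub>v y') $ j" by (rule Rmono[OF y y' yy' j])
        thus "y'$j \<le> \<theta> * (R *\<^sub>v y') $ j" using th0 j R by (simp add: y'_def)
      qed
      with Suc.IH y' have "y'$i \<le> \<theta>^k * (R ^\<^sub>m k *\<^sub>v y') $ i" using i by blast
      also have "(R ^\<^sub>m k *\<^sub>v y') = \<theta> \<cdot>\<^sub>v (R ^\<^sub>m Suc k *\<^sub>v y)"
      proof -
        have Rk: "R ^\<^sub>m k \<in> carrier_mat m m" using R by (rule pow_carrier_mat)
        have "R ^\<^sub>m k *\<^sub>v y' = \<theta> \<cdot>\<^sub>v (R ^\<^sub>m k *\<^sub>v (R *\<^sub>v y))"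
          unfolding y'_def by (rule mult_mat_vec[OF Rk]) (use R y in auto)
        also have "R ^\<^sub>m k *\<^sub>v (R *\<^sub>v y) = R ^\<^sub>m Suc k *\<^sub>v y"
          using assoc_mult_mat_vec[OF Rk R y] by simp
        finally show ?thesis .
      qed
      finally have "y'$i \<le> \<theta>^k * (\<theta> \<cdot>\<^sub>v (R ^\<^sub>m Suc k *\<^sub>v y)) $ i" .
      also have "\<dots> = \<theta>^Suc k * (R ^\<^sub>m Suc k *\<^sub>v y) $ i" using i R by (simp add: pow_carrier_mat)
      finally show "y$i \<le> \<theta>^Suc k * (R ^\<^sub>m Suc k *\<^sub>v y) $ i"
        using yy' i by (meson order_trans)
    qed
  qed
  define X where "X = (\<Sum>j\<in>{0..<m}. \<bar>x$j\<bar>)"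
  have bound: "x$i \<le> \<theta>^k * (K * X)" for k
  proof -
    have Rk: "R ^\<^sub>m k \<in> carrier_mat m m" using R by (rule pow_carrier_mat)
    have "x$i \<le> \<theta>^k * (R ^\<^sub>m k *\<^sub>v x) $ i" using iter[of k] x xstep im by blast
    also have "(R ^\<^sub>m k *\<^sub>v x) $ i \<le> K * X"
    proof -
      have "(R ^\<^sub>m k *\<^sub>v x) $ i \<le> \<bar>\<Sum>j\<in>{0..<m}. (R ^\<^sub>m k) $$ (i,j) * x $ j\<bar>"
        unfolding mv_idx[OF Rk x im] by simp
      also have "\<dots> \<le> (\<Sum>j\<in>{0..<m}. \<bar>(R ^\<^sub>m k) $$ (i,j)\<bar> * \<bar>x $ j\<bar>)"
        by (rule order_trans[OF sum_abs]) (simp add: abs_mult)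
      also have "\<dots> \<le> (\<Sum>j\<in>{0..<m}. K * \<bar>x $ j\<bar>)"
        by (rule sum_mono) (use Kb im in \<open>auto intro: mult_right_mono\<close>)
      finally show ?thesis by (simp add: X_def sum_distrib_left)
    qed
    hence "\<theta>^k * (R ^\<^sub>m k *\<^sub>v x) $ i \<le> \<theta>^k * (K * X)" using th0 by (simp add: mult_left_mono)
    finally show ?thesis .
  qed
  show ?thesis
  proof (rule ccontr)
    assume "\<not> x$i \<le> 0"
    hence pos: "x$i > 0" by simp
    have "(\<lambda>k. \<theta>^k * (K * X)) \<longlonglongrightarrow> 0 * (K * X)"
      by (intro tendsto_mult LIMSEQ_power_zero tendsto_const) (use th0 th1 in auto)
    hence "\<forall>\<^sub>F k in sequentially. \<theta>^k * (K * X) < x$i" using pos by (simp add: order_tendstoD(2))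
    then obtain k where "\<theta>^k * (K * X) < x$i" by (auto simp: eventually_sequentially)
    thus False using bound[of k] by simp
  qed
qed

lemma metzler_hurwitz_nonneg:
  assumes B: "B \<in> carrier_mat m m" and met: "metzler B" and hur: "hurwitz B"
    and x: "x \<in> carrier_vec m" and Bx: "\<forall>i<m. (B *\<^sub>v x)$i \<le> 0"
    and im: "i < m"
  shows "x $ i \<ge> 0"
proof -
  have x': "-x \<in> carrier_vec m" using x by simp
  have "\<forall>i<m. (B *\<^sub>v (-x))$i \<ge> 0"
  proof (intro allI impI)
    fix i assume i: "i < m"
    have "(B *\<^sub>v (-x))$i = - (B *\<^sub>v x)$i"
      unfolding mv_idx[OF B x' i] mv_idx[OF B x i] using x i by (simp add: sum_negf)
    thus "(B *\<^sub>v (-x))$i \<ge> 0" using Bx i by simp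
  qed
  from metzler_hurwitz_nonpos[OF B met hur x' this im] show ?thesis using x im by simp
qed

lemma A11_idx:
  assumes A: "A \<in> carrier_mat n n" and i: "i < n - 1" and j: "j < n - 1"
  shows "(transpose_mat (S_mat n) * A * S_mat n) $$ (i,j) = A $$ (i,j)"
proof -
  have S: "S_mat n \<in> carrier_mat n (n-1)" by (simp add: S_mat_def)
  have "(transpose_mat (S_mat n) * A) $$ (i,k) = A $$ (i,k)" if k: "k < n" for k
  proof -
    have "(transpose_mat (S_mat n) * A) $$ (i,k) = (\<Sum>l\<in>{0..<n}. (if l = i then A $$ (l,k) else 0))"
      using i k A S by (auto simp: scalar_prod_def S_mat_def if_distrib[of "\<lambda>a. a * _"] cong: if_cong)
    also have "\<dots> = A $$ (i,k)" using i by simp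
    finally show ?thesis .
  qed
  hence "(transpose_mat (S_mat n) * A * S_mat n) $$ (i,j) = (\<Sum>l\<in>{0..<n}. (if l = j then A $$ (i,l) else 0))"
    using i j A S by (auto simp: scalar_prod_def S_mat_def if_distrib[of "\<lambda>a. _ * a"] cong: if_cong)
  also have "\<dots> = A $$ (i,j)" using j by simp
  finally show ?thesis .
qed

lemma mv_split:
  assumes M: "M \<in> carrier_mat (Suc m) (Suc m)" and y: "y \<in> carrier_vec (Suc m)" and i: "i < Suc m"
  shows "(M *\<^sub>v y)$i = (\<Sum>j\<in>{0..<m}. M$$(i,j) * y$j) + M$$(i,m) * y$m"
  unfolding mv_idx[OF M y i] by simp

theorem mainTheorem12:
  fixes n :: nat and A Ainv :: "real mat" and b0 :: "real vec" and r :: real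
  assumes "n \<ge> 2"
    and "A \<in> carrier_mat n n"
    and "metzler A"
    and "output_unstable A"
    and "det A \<noteq> 0"
    and "Ainv \<in> carrier_mat n n" and "A * Ainv = 1\<^sub>m n" and "Ainv * A = 1\<^sub>m n"
    and "b0 \<in> carrier_vec n" and "\<forall>i < n. 0 \<le> b0 $ i"
    and "r > 0"
  shows "let g0 = - (e_last n \<bullet> (Ainv *\<^sub>v b0));
             gn = - (e_last n \<bullet> (Ainv *\<^sub>v e_last n));
             u = (g0 - r) / (gn * r)
         in hurwitz (A - u \<cdot>\<^sub>m En_mat n) \<longleftrightarrow> g0 < 0"
proof -
  obtain m where nm: "n = Suc m" and m1: "m \<ge> 1" using assms(1) by (cases n) auto
  have mm: "n - 1 = m" using nm by simp
  have Ac: "A \<in> carrier_mat (Suc m) (Suc m)" using assms(2) nm by simp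
  have Ainvc: "Ainv \<in> carrier_mat (Suc m) (Suc m)" using assms(6) nm by simp
  have metA: "metzler A" by fact
  have offA: "A $$ (i,j) \<ge> 0" if "i < Suc m" "j < Suc m" "i \<noteq> j" for i j
    using metA Ac that unfolding metzler_def by auto
  define A11 where "A11 = transpose_mat (S_mat n) * A * S_mat n"
  have A11c: "A11 \<in> carrier_mat m m" using assms(2) nm by (auto simp: A11_def S_mat_def intro!: carrier_matI)
  have A11i: "A11 $$ (i,j) = A $$ (i,j)" if "i < m" "j < m" for i j
    using A11_idx[OF assms(2)] that mm by (simp add: A11_def)
  define el where "el = e_last n"
  have elc: "el \<in> carrier_vec (Suc m)" by (simp add: el_def e_last_def nm)
  have eli: "el $ j = (if j = m then 1 else 0)" if "j < Suc m" for j
    using that by (simp add: el_def e_last_def nm)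
  have ou: "hurwitz A11" "el \<bullet> (A *\<^sub>v el) > 0"
    using assms(4) assms(2) unfolding output_unstable_def Let_def A11_def el_def by auto
  have ann: "A $$ (m,m) > 0"
  proof -
    have "el \<bullet> (A *\<^sub>v el) = (A *\<^sub>v el) $ m"
      unfolding el_def e_last_def nm using Ac elc by (simp add: el_def e_last_def nm)
    also have "\<dots> = A $$ (m,m)" unfolding mv_split[OF Ac elc lessI] using eli by simp
    finally show ?thesis using ou(2) by simp
  qed
  have metA11: "metzler A11" unfolding metzler_def using A11c A11i offA by auto
  have A11mv: "(A11 *\<^sub>v p)$i = (\<Sum>j\<in>{0..<m}. A$$(i,j) * p$j)" if "p \<in> carrier_vec m" "i < m" for p i
    unfolding mv_idx[OF A11c that] using that A11i by (intro sum.cong) auto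
  note K = metzler_hurwitz_nonpos[OF A11c metA11 ou(1)]
  note K' = metzler_hurwitz_nonneg[OF A11c metA11 ou(1)]
  define y where "y = Ainv *\<^sub>v el"
  have yc: "y \<in> carrier_vec (Suc m)" using Ainvc elc by (simp add: y_def)
  have Ay: "A *\<^sub>v y = el" unfolding y_def
    using assoc_mult_mat_vec[OF Ac Ainvc elc, symmetric] assms(7) nm elc by simp
  define t where "t = y$m"
  have eq1: "(\<Sum>j\<in>{0..<m}. A$$(i,j)*y$j) + A$$(i,m)*t = 0" if "i < m" for i
    using mv_split[OF Ac yc, of i] that Ay eli[of i] by (simp add: t_def)
  have eq2: "(\<Sum>j\<in>{0..<m}. A$$(m,j)*y$j) + A$$(m,m)*t = 1"
    using mv_split[OF Ac yc, of m] Ay eli[of m] by (simp add: t_def)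
  have t0: "t \<noteq> 0"
  proof
    assume t: "t = 0"
    define p where "p = vec m (\<lambda>j. y$j)"
    have pc: "p \<in> carrier_vec m" by (simp add: p_def)
    have Ap: "(A11 *\<^sub>v p)$i = 0" if "i < m" for i
      using eq1[OF that] t A11mv[OF pc that] by (simp add: p_def)
    have "p$j = 0" if "j < m" for j
      using K[OF pc _ that] K'[OF pc _ that] Ap by fastforce
    hence "y$j = 0" if "j < m" for j using that by (simp add: p_def)
    thus False using eq2 t by simp
  qed
  define x where "x = vec m (\<lambda>j. y$j / t)"
  have xc: "x \<in> carrier_vec m" by (simp add: x_def)
  have A11x: "(A11 *\<^sub>v x)$i = - A$$(i,m)" if "i < m" for i
  proof -
    have "(A11 *\<^sub>v x)$i = (\<Sum>j\<in>{0..<m}. A$$(i,j)*y$j) / t"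
      unfolding A11mv[OF xc that] by (simp add: x_def sum_divide_distrib)
    also have "\<dots> = - A$$(i,m)" using eq1[OF that] t0 by (simp add: field_simps)
    finally show ?thesis .
  qed
  have xnn: "x$j \<ge> 0" if "j < m" for j
    using K'[OF xc _ that] A11x offA by auto
  define D where "D = (\<Sum>j\<in>{0..<m}. A$$(m,j) * x$j)"
  have Dnn: "D \<ge> 0" unfolding D_def using offA xnn by (intro sum_nonneg) auto
  have D1: "D + A$$(m,m) = 1/t"
  proof -
    have "D = (\<Sum>j\<in>{0..<m}. A$$(m,j)*y$j) / t" by (simp add: D_def x_def sum_divide_distrib)
    thus ?thesis using eq2 t0 by (simp add: field_simps)
  qed
  have tpos: "t > 0" using D1 Dnn ann by (smt (verit) divide_nonpos_neg zero_less_divide_1_iff)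
  have gn: "e_last n \<bullet> (Ainv *\<^sub>v e_last n) = t"
    using yc unfolding t_def y_def el_def by (simp add: e_last_def nm)
  define g0 where "g0 = - (e_last n \<bullet> (Ainv *\<^sub>v b0))"
  define u where "u = (g0 - r) / (- t * r)"
  define Ab where "Ab = A - u \<cdot>\<^sub>m En_mat n"
  have Abc: "Ab \<in> carrier_mat (Suc m) (Suc m)" using Ac by (auto simp: Ab_def En_mat_def nm intro!: carrier_matI)
  have Abi: "Ab $$ (i,j) = A $$ (i,j) - (if i = m \<and> j = m then u else 0)" if "i < Suc m" "j < Suc m" for i j
    using that Ac by (simp add: Ab_def En_mat_def nm e_last_def)
  have metAb: "metzler Ab" unfolding metzler_def using Abc Abi offA by auto
  define sb where "sb = D + A$$(m,m) - u"
  have sb: "sb = g0 / (t * r)" unfolding sb_def D1 u_def using tpos assms(11)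
    by (simp add: field_simps)
  have "hurwitz Ab \<longleftrightarrow> g0 < 0"
  proof
    assume hAb: "hurwitz Ab"
    show "g0 < 0"
    proof (rule ccontr)
      assume "\<not> g0 < 0"
      hence sb0: "sb \<ge> 0" unfolding sb using tpos assms(11) by simp
      define z where "z = vec (Suc m) (\<lambda>j. if j < m then x$j else 1)"
      have zc: "z \<in> carrier_vec (Suc m)" by (simp add: z_def)
      have "(Ab *\<^sub>v z)$i \<ge> 0" if "i < Suc m" for i
      proof (cases "i < m")
        case True
        have ss: "(\<Sum>j\<in>{0..<m}. Ab$$(i,j) * z$j) = (\<Sum>j\<in>{0..<m}. A$$(i,j) * x$j)"
          by (rule sum.cong) (use True in \<open>auto simp: Abi z_def\<close>)
        have "(Ab *\<^sub>v z)$i = (A11 *\<^sub>v x)$i + A$$(i,m)"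
          unfolding mv_split[OF Abc zc that] A11mv[OF xc True] ss using True by (simp add: Abi z_def)
        thus ?thesis using A11x[OF True] by simp
      next
        case False
        hence im: "i = m" using that by simp
        have ss: "(\<Sum>j\<in>{0..<m}. Ab$$(m,j) * z$j) = (\<Sum>j\<in>{0..<m}. A$$(m,j) * x$j)"
          by (rule sum.cong) (auto simp: Abi z_def)
        have "(Ab *\<^sub>v z)$i = sb"
          unfolding im mv_split[OF Abc zc lessI] sb_def D_def ss by (simp add: Abi z_def)
        thus ?thesis using sb0 by simp
      qed
      from metzler_hurwitz_nonpos[OF Abc metAb hAb zc _ lessI] this
      show False by (simp add: z_def)
    qed
  next
    assume g0: "g0 < 0"
    hence sbn: "sb < 0" unfolding sb using tpos assms(11) by (simp add: divide_neg_pos)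
    define ov where "ov = vec (Suc m) (\<lambda>i. if i < m then (1::real) else 0)"
    have oc: "ov \<in> carrier_vec (Suc m)" by (simp add: ov_def)
    define q where "q = Ainv *\<^sub>v ov"
    have qc: "q \<in> carrier_vec (Suc m)" using Ainvc oc by (simp add: q_def)
    have Aq: "A *\<^sub>v q = ov" unfolding q_def
      using assoc_mult_mat_vec[OF Ac Ainvc oc, symmetric] assms(7) nm oc by simp
    define \<tau> where "\<tau> = q$m"
    have eq3: "(\<Sum>j\<in>{0..<m}. A$$(i,j)*q$j) + A$$(i,m)*\<tau> = 1" if "i < m" for i
      using mv_split[OF Ac qc, of i] that Aq by (simp add: \<tau>_def ov_def)
    define w where "w = vec m (\<lambda>j. \<tau> * x$j - q$j)"
    have wc: "w \<in> carrier_vec m" by (simp add: w_def)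
    have A11w: "(A11 *\<^sub>v w)$i = -1" if "i < m" for i
    proof -
      have "(A11 *\<^sub>v w)$i = \<tau> * (A11 *\<^sub>v x)$i - (\<Sum>j\<in>{0..<m}. A$$(i,j)*q$j)"
        unfolding A11mv[OF wc that] A11mv[OF xc that]
        by (simp add: w_def algebra_simps sum_subtractf sum_distrib_left)
      thus ?thesis using eq3[OF that] A11x[OF that] by (simp add: algebra_simps)
    qed
    have wnn: "w$j \<ge> 0" if "j < m" for j
      using K'[OF wc _ that] A11w by auto
    have wpos: "w$j > 0" if j: "j < m" for j
    proof (rule ccontr)
      assume "\<not> w$j > 0"
      hence wj: "w$j = 0" using wnn[OF j] by simp
      have "0 \<le> (\<Sum>k\<in>{0..<m}. A$$(j,k)*w$k)"
      proof (rule sum_nonneg)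
        fix k assume k: "k \<in> {0..<m}"
        show "0 \<le> A$$(j,k)*w$k"
        proof (cases "k = j")
          case True thus ?thesis using wj by simp
        next
          case False thus ?thesis using offA[of j k] j k wnn[of k] by simp
        qed
      qed
      thus False using A11w[OF j] A11mv[OF wc j] by simp
    qed
    define E where "E = (\<Sum>j\<in>{0..<m}. A$$(m,j) * w$j)"
    have Enn: "E \<ge> 0" unfolding E_def using offA wnn by (intro sum_nonneg) auto
    define \<epsilon> where "\<epsilon> = - sb / (2 * (1 + E))"
    have epos: "\<epsilon> > 0" using sbn Enn unfolding \<epsilon>_def by (intro divide_pos_pos) auto
    have eE: "\<epsilon> * E \<le> - sb / 2"
    proof -
      have "\<epsilon> * E = (- sb / 2) * (E / (1 + E))" using Enn by (simp add: \<epsilon>_def field_simps)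
      also have "\<dots> \<le> (- sb / 2) * 1" using sbn Enn by (intro mult_left_mono) auto
      finally show ?thesis by simp
    qed
    define v where "v = vec (Suc m) (\<lambda>j. if j < m then x$j + \<epsilon> * w$j else 1)"
    have vc: "v \<in> carrier_vec (Suc m)" by (simp add: v_def)
    have vpos: "\<forall>i<Suc m. v$i > 0"
    proof (intro allI impI)
      fix i assume ii: "i < Suc m"
      show "v$i > 0"
      proof (cases "i < m")
        case True thus ?thesis using xnn[OF True] wpos[OF True] epos by (simp add: v_def add_nonneg_pos)
      qed (use ii in \<open>simp add: v_def\<close>)
    qed
    have Abv: "\<forall>i<Suc m. (Ab *\<^sub>v v)$i < 0"
    proof (intro allI impI)
      fix i assume i: "i < Suc m"
      show "(Ab *\<^sub>v v)$i < 0"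
      proof (cases "i < m")
        case True
        have ss: "(\<Sum>j\<in>{0..<m}. Ab$$(i,j) * v$j) = (\<Sum>j\<in>{0..<m}. A$$(i,j) * x$j + \<epsilon> * (A$$(i,j) * w$j))"
          by (rule sum.cong) (use True in \<open>auto simp: Abi v_def algebra_simps\<close>)
        have "(Ab *\<^sub>v v)$i = (\<Sum>j\<in>{0..<m}. A$$(i,j) * x$j + \<epsilon> * (A$$(i,j) * w$j)) + A$$(i,m)"
          unfolding mv_split[OF Abc vc i] ss using True by (simp add: Abi v_def)
        also have "\<dots> = (A11 *\<^sub>v x)$i + \<epsilon> * (A11 *\<^sub>v w)$i + A$$(i,m)"
          unfolding A11mv[OF xc True] A11mv[OF wc True] by (simp add: sum.distrib sum_distrib_left)
        also have "\<dots> = - \<epsilon>" using A11x[OF True] A11w[OF True] by simp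
        finally show ?thesis using epos by simp
      next
        case False
        hence im: "i = m" using i by simp
        have ss: "(\<Sum>j\<in>{0..<m}. Ab$$(m,j) * v$j) = (\<Sum>j\<in>{0..<m}. A$$(m,j) * x$j + \<epsilon> * (A$$(m,j) * w$j))"
          by (rule sum.cong) (auto simp: Abi v_def algebra_simps)
        have "(Ab *\<^sub>v v)$i = (\<Sum>j\<in>{0..<m}. A$$(m,j) * x$j + \<epsilon> * (A$$(m,j) * w$j)) + (A$$(m,m) - u)"
          unfolding im mv_split[OF Abc vc lessI] ss by (simp add: Abi v_def)
        also have "\<dots> = sb + \<epsilon> * E"
          by (simp add: sb_def D_def E_def sum.distrib sum_distrib_left)
        finally show ?thesis using eE sbn by simp
      qed
    qed
    show "hurwitz Ab" by (rule hurwitz_of_pos_vec[OF Abc metAb vc vpos Abv])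
  qed
  thus ?thesis unfolding Let_def gn g0_def[symmetric] using u_def Ab_def
    by (simp add: u_def Ab_def)
qed

end
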